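(* Let $\nu$ be a probability distribution on $\mathbb N_0$ and ${\mathbf T}$ a thinning matrix, and put $\nu'=\nu{\mathbf T}$. Let ${\mathbf Q}$ be a condensation matrix such that $\nu'_k{\mathbf Q}_{k,n}=\nu_n{\mathbf T}_{n,k}$ for all $k,n\in\mathbb N_0$. Then for all $n,k,i,j\in\mathbb N_0$ with $j\ge n$, $i\le j$, $i\le n$ and $\nu_n>0$, $${\mathbf T}_{n,i}{\mathbf Q}_{i,j}{\mathbf T}_{j,k}{\mathbf Q}_{k,n}={\mathbf T}_{n,k}{\mathbf Q}_{k,j}{\mathbf T}_{j,i}{\mathbf Q}_{i,n}.$$
   Context: A thinning matrix is a stochastic matrix ${\mathbf T}$ on $\mathbb N_0$ with ${\mathbf T}_{n,k}=0$ for $k>n$. A condensation matrix is a stochastic matrix ${\mathbf Q}$ on $\mathbb N_0$ with ${\mathbf Q}_{k,n}=0$ for $k>n$. $(\nu{\mathbf T})_k=\sum_n\nu_n{\mathbf T}_{n,k}$. *)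

theory Defs
  imports Complex_Main
begin

definition prob_dist :: "(nat \<Rightarrow> real) \<Rightarrow> bool" where
  "prob_dist \<nu> \<longleftrightarrow> (\<forall>n. \<nu> n \<ge> 0) \<and> \<nu> sums 1"

definition stochastic :: "(nat \<Rightarrow> nat \<Rightarrow> real) \<Rightarrow> bool" where
  "stochastic M \<longleftrightarrow> (\<forall>n k. M n k \<ge> 0) \<and> (\<forall>n. (\<lambda>k. M n k) sums 1)"

definition thinning :: "(nat \<Rightarrow> nat \<Rightarrow> real) \<Rightarrow> bool" where
  "thinning T \<longleftrightarrow> stochastic T \<and> (\<forall>n k. k > n \<longrightarrow> T n k = 0)"

definition condensation :: "(nat \<Rightarrow> nat \<Rightarrow> real) \<Rightarrow> bool" where
  "condensation Q \<longleftrightarrow> stochastic Q \<and> (\<forall>k n. k > n \<longrightarrow> Q k n = 0)"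

definition vec_mat :: "(nat \<Rightarrow> real) \<Rightarrow> (nat \<Rightarrow> nat \<Rightarrow> real) \<Rightarrow> nat \<Rightarrow> real" where
  "vec_mat \<nu> T k = (\<Sum>n. \<nu> n * T n k)"

end

theory Submission
  imports Defs
begin

lemma term_le:
  assumes "prob_dist \<nu>" and "thinning T"
  shows "\<nu> m * T m k \<le> vec_mat \<nu> T k" "0 \<le> \<nu> m * T m k"
proof -
  have nn: "\<And>m. 0 \<le> \<nu> m" using assms(1) by (simp add: prob_dist_def)
  have Tn: "\<And>m k. 0 \<le> T m k" using assms(2) by (simp add: thinning_def stochastic_def)
  have Ts: "\<And>m. (\<lambda>k. T m k) sums 1" using assms(2) by (simp add: thinning_def stochastic_def)
  have T1: "\<And>m k. T m k \<le> 1"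
  proof -
    fix m k
    have "summable (\<lambda>k. T m k)" using Ts sums_summable by blast
    hence "T m k \<le> (\<Sum>k. T m k)" using Tn sum_le_suminf[of "\<lambda>k. T m k" "{k}"] by auto
    thus "T m k \<le> 1" using Ts sums_unique by metis
  qed
  have s\<nu>: "summable \<nu>" using assms(1) prob_dist_def sums_summable by blast
  have sm: "summable (\<lambda>m. \<nu> m * T m k)"
    by (rule summable_comparison_test'[OF s\<nu>, of 0]) (use nn Tn T1 in \<open>auto intro: mult_left_le\<close>)
  show "0 \<le> \<nu> m * T m k" using nn Tn by simp
  show "\<nu> m * T m k \<le> vec_mat \<nu> T k" unfolding vec_mat_def
    using sum_le_suminf[OF sm, of "{m}"] nn Tn by auto
qed

theorem mainTheorem3:
  fixes \<nu> :: "nat \<Rightarrow> real" and T Q :: "nat \<Rightarrow> nat \<Rightarrow> real"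
  assumes "prob_dist \<nu>" and "thinning T" and "condensation Q"
    and "\<And>k n. vec_mat \<nu> T k * Q k n = \<nu> n * T n k"
    and "j \<ge> n" and "i \<le> j" and "i \<le> n" and "\<nu> n > 0"
  shows "T n i * Q i j * T j k * Q k n = T n k * Q k j * T j i * Q i n"
proof -
  define a where "a = vec_mat \<nu> T i"
  define b where "b = vec_mat \<nu> T k"
  note E = assms(4)
  have le: "\<And>m k. \<nu> m * T m k \<le> vec_mat \<nu> T k" "\<And>m k. 0 \<le> \<nu> m * T m k"
    using term_le[OF assms(1,2)] by auto
  have a0: "a \<ge> 0" using le[of n i] le(2)[of n i] unfolding a_def by linarith
  have b0: "b \<ge> 0" using le[of n k] le(2)[of n k] unfolding b_def by linarith
  show ?thesis
  proof (cases "a = 0")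
    case True
    have "\<nu> n * T n i = 0" using E[of i n] True a_def by simp
    hence Tni: "T n i = 0" using assms(8) by simp
    have "\<nu> j * T j i = 0" using le[of j i] le(2)[of j i] True a_def by linarith
    show ?thesis
    proof (cases "b = 0")
      case True
      have "\<nu> n * T n k = 0" using E[of k n] True b_def by simp
      hence "T n k = 0" using assms(8) by simp
      thus ?thesis using Tni by simp
    next
      case False
      show ?thesis
      proof (cases "\<nu> j = 0")
        case True
        have "b * Q k j = 0" using E[of k j] True b_def by simp
        hence "Q k j = 0" using False by simp
        thus ?thesis using Tni by simp
      next
        case False
        hence "T j i = 0" using \<open>\<nu> j * T j i = 0\<close> by simp
        thus ?thesis using Tni by simp
      qed
    qed
  next
    case anz: False
    show ?thesis
    proof (cases "b = 0")
      case True
      have "\<nu> n * T n k = 0" using E[of k n] True b_def by simp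
      hence Tnk: "T n k = 0" using assms(8) by simp
      have "\<nu> j * T j k = 0" using le[of j k] le(2)[of j k] True b_def by linarith
      show ?thesis
      proof (cases "\<nu> j = 0")
        case True
        have "a * Q i j = 0" using E[of i j] True a_def by simp
        hence "Q i j = 0" using anz by simp
        thus ?thesis using Tnk by simp
      next
        case False
        hence "T j k = 0" using \<open>\<nu> j * T j k = 0\<close> by simp
        thus ?thesis using Tnk by simp
      qed
    next
      case bnz: False
      have e1: "a * Q i j = \<nu> j * T j i" using E a_def by simp
      have e2: "b * Q k n = \<nu> n * T n k" using E b_def by simp
      have e3: "b * Q k j = \<nu> j * T j k" using E b_def by simp
      have e4: "a * Q i n = \<nu> n * T n i" using E a_def by simp
      have "a * b * (T n i * Q i j * T j k * Q k n) = T n i * (a * Q i j) * T j k * (b * Q k n)"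
        by (simp add: algebra_simps)
      also have "\<dots> = T n k * (b * Q k j) * T j i * (a * Q i n)"
        unfolding e1 e2 e3 e4 by (simp add: algebra_simps)
      also have "\<dots> = a * b * (T n k * Q k j * T j i * Q i n)"
        by (simp add: algebra_simps)
      finally show ?thesis using anz bnz by simp
    qed
  qed
qed

end
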